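(* Let $\tau:\mathbb N\to\mathbb N$ be defined by $\tau(n)=\lfloor\varphi n+1\rfloor$ if $n\in R_{2,0}$, $\tau(n)=\lfloor\varphi n-1\rfloor$ if $n\in R_{1,0}$, and $\tau(n)=\lfloor(\varphi-1)n+1\rfloor$ if $n\in R_{1,1}$. Then for every integer $n\geq 1$, $\tau^n(3)=F(n+3)+2$.
   Context: $\mathbb N=\{1,2,\dots\}$, $\varphi=\frac{1+\sqrt5}{2}$, $F$ the Fibonacci sequence with $F(0)=0$, $F(1)=F(2)=1$, $F(n)=F(n-1)+F(n-2)$. For $i\in\mathbb Z^{\ge0},j\in\mathbb Z$, $R_{i,j}$ is the range of $n\mapsto F(i+1)\lfloor n\varphi\rfloor+F(i)n-j$, $n\in\mathbb N$; the sets $R_{2,0},R_{1,0},R_{1,1}$ partition $\mathbb N$. $\tau^n$ denotes the $n$-fold composition. *)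

theory Defs
  imports Complex_Main "HOL-Number_Theory.Fib"
begin

definition phi :: real where "phi = (1 + sqrt 5) / 2"

definition R :: "nat \<Rightarrow> int \<Rightarrow> int set" where
  "R i j = {int (fib (i+1)) * \<lfloor>real n * phi\<rfloor> + int (fib i) * int n - j | n :: nat. n \<ge> 1}"

text \<open>The map tau on positive integers; its value at 0 (outside N) is irrelevant, set to 0.\<close>
definition tau :: "nat \<Rightarrow> nat" where
  "tau n = (if int n \<in> R 2 0 then nat \<lfloor>phi * real n + 1\<rfloor>
            else if int n \<in> R 1 0 then nat \<lfloor>phi * real n - 1\<rfloor>
            else if int n \<in> R 1 1 then nat \<lfloor>(phi - 1) * real n + 1\<rfloor>
            else 0)"

end

theory Submission imports Defs "HOL-Computational_Algebra.Primes" begin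

lemma phi_sq: "phi^2 = phi + 1"
  unfolding phi_def by (simp add: power2_eq_square field_simps)

lemma phi_lb: "1.618 < phi"
proof -
  have "2.236 < sqrt 5" by (rule real_less_rsqrt) (simp add: power2_eq_square)
  thus ?thesis unfolding phi_def by simp
qed

lemma phi_ub: "phi < 1.6181"
proof -
  have "sqrt 5 < sqrt (2.2362^2)" by (rule real_sqrt_less_mono) (simp add: power2_eq_square)
  hence "sqrt 5 < 2.2362" by simp
  thus ?thesis unfolding phi_def by simp
qed

lemma descent: "0 < m \<Longrightarrow> (t::nat)^2 \<noteq> 5 * m^2"
proof (induction m arbitrary: t rule: less_induct)
  case (less m)
  show ?case
  proof
    assume h: "t^2 = 5 * m^2"
    have e5: "{2..<5} = {2,3,4::nat}" by auto
    have p5: "prime (5::nat)" by (simp add: prime_nat_iff' e5)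
    have "5 dvd t^2" using h by simp
    hence "5 dvd t" using p5 prime_dvd_power by blast
    then obtain s where s: "t = 5 * s" by blast
    have h2: "m^2 = 5 * s^2" using h s by (simp add: power_mult_distrib)
    hence "5 dvd m^2" by simp
    hence "5 dvd m" using p5 prime_dvd_power by blast
    then obtain r where r: "m = 5 * r" by blast
    have "s^2 = 5 * r^2" using h2 r by (simp add: power_mult_distrib)
    moreover have "r < m" "0 < r" using r less.prems by auto
    ultimately show False using less.IH by blast
  qed
qed

lemma not_int: assumes "m > 0" shows "real m * phi \<noteq> of_int k"
proof
  assume h: "real m * phi = of_int k"
  have "real m * sqrt 5 = 2 * of_int k - real m" using h unfolding phi_def by (simp add: field_simps)
  hence "(real m * sqrt 5)^2 = (2 * of_int k - real m)^2" by simp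
  hence "5 * real m^2 = (of_int (2*k - int m))^2" by (simp add: power_mult_distrib)
  hence "5 * real m^2 = (of_int \<bar>2*k - int m\<bar>)^2" by simp
  hence "5 * real m^2 = real (nat \<bar>2*k - int m\<bar>)^2" by simp
  hence "5 * m^2 = (nat \<bar>2*k - int m\<bar>)^2" by (metis of_nat_eq_iff of_nat_mult of_nat_numeral of_nat_power)
  thus False using descent assms by metis
qed

lemma e_formula: "phi * fib j - fib (Suc j) = -((1 - phi)^j)"
proof (induction j rule: nat_less_induct)
  case (1 j)
  show ?case
  proof (cases j)
    case 0 then show ?thesis by simp
  next
    case (Suc i)
    have IH: "phi * fib i - fib (Suc i) = -((1 - phi)^i)" using 1 Suc by simp
    have pp: "phi * (phi * x) = x + phi * x" for x :: real
      using phi_sq by (simp add: power2_eq_square mult.assoc[symmetric] distrib_right)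
    have "phi * fib (Suc i) - fib (Suc (Suc i)) = (phi - 1) * fib (Suc i) - fib i" by (simp add: algebra_simps)
    also have "\<dots> = (1 - phi) * (phi * fib i - fib (Suc i))"
      using pp[of "real (fib i)"] by (simp add: algebra_simps)
    also have "\<dots> = -((1 - phi)^(Suc i))" using IH by simp
    finally show ?thesis using Suc by simp
  qed
qed

lemma e_abs: "\<bar>phi * fib j - fib (Suc j)\<bar> = (phi - 1)^j"
  using e_formula phi_lb by (simp add: power_abs)

lemma e_small: assumes "j \<ge> 3" shows "\<bar>phi * fib j - fib (Suc j)\<bar> \<le> (phi - 1)^3"
  unfolding e_abs using assms phi_lb phi_ub by (intro power_decreasing) auto

lemma e_small4: assumes "j \<ge> 4" shows "\<bar>phi * fib j - fib (Suc j)\<bar> \<le> (phi - 1)^4"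
  unfolding e_abs using assms phi_lb phi_ub by (intro power_decreasing) auto

lemma c3: "(phi - 1)^3 < 0.24"
proof -
  have "(phi - 1)^3 \<le> 0.6181^3" using phi_lb phi_ub by (intro power_mono) auto
  moreover have "(0.6181::real)^3 < 0.24" by (simp add: power3_eq_cube)
  ultimately show ?thesis by simp
qed

lemma c4: "(phi - 1)^4 < 0.15"
proof -
  have "(phi - 1)^4 \<le> 0.6181^4" using phi_lb phi_ub by (intro power_mono) auto
  moreover have "(0.6181::real)^4 < 0.15" by (simp add: power4_eq_xxxx)
  ultimately show ?thesis by simp
qed

lemma R20_iff: "x \<in> R 2 0 \<longleftrightarrow> (\<exists>n::nat. n \<ge> 1 \<and> x = 2 * \<lfloor>real n * phi\<rfloor> + int n)"
  unfolding R_def by (auto simp: numeral_eq_Suc)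

lemma R10_iff: "x \<in> R 1 0 \<longleftrightarrow> (\<exists>n::nat. n \<ge> 1 \<and> x = \<lfloor>real n * phi\<rfloor> + int n)"
  unfolding R_def by (auto simp: numeral_eq_Suc)

lemma disj: assumes "x \<in> R 2 0" "x \<in> R 1 0" shows False
proof -
  obtain m :: nat where m: "m \<ge> 1" "x = 2 * \<lfloor>real m * phi\<rfloor> + int m" using assms(1) R20_iff by blast
  obtain q :: nat where q: "q \<ge> 1" "x = \<lfloor>real q * phi\<rfloor> + int q" using assms(2) R10_iff by blast
  define a where "a = \<lfloor>real m * phi\<rfloor>"
  define f where "f = real m * phi - a"
  have f0: "0 < f" using not_int[of m a] m(1) unfolding f_def a_def
    by (metis le_less of_int_floor_le diff_gt_0_iff_gt not_less_iff_gr_or_eq zero_less_one less_le_trans le_numeral_extra(4) of_nat_0_less_iff)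
  have f1: "f < 1" unfolding f_def a_def by linarith
  define c where "c = \<lfloor>real q * phi\<rfloor>"
  define g where "g = real q * phi - c"
  have g0: "0 < g" using not_int[of q c] q(1) unfolding g_def c_def
    by (metis le_less of_int_floor_le diff_gt_0_iff_gt not_less_iff_gr_or_eq zero_less_one less_le_trans le_numeral_extra(4) of_nat_0_less_iff)
  have g1: "g < 1" unfolding g_def c_def by linarith
  have pp: "phi * phi = phi + 1" using phi_sq by (simp add: power2_eq_square)
  define u where "u = (a + real m) * phi"
  have u_eq: "u = 2 * a + m + f * (2 - phi)"
  proof -
    have "u = a * phi + m * phi" unfolding u_def by (simp add: algebra_simps)
    also have "a * phi = (m * phi - f) * phi" unfolding f_def by simp
    also have "\<dots> = m * (phi * phi) - f * phi" by (simp add: algebra_simps)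
    also have "\<dots> = m * phi + m - f * phi" using pp by (simp add: algebra_simps)
    finally show ?thesis unfolding f_def by (simp add: algebra_simps)
  qed
  have xr: "real_of_int x = 2 * a + m" using m(2) a_def by simp
  have xr2: "real_of_int x = c + q" using q(2) c_def by simp
  have fp0: "0 < f * (2 - phi)" using f0 phi_ub by (auto intro: mult_pos_pos)
  have "f * (2 - phi) < 1 * (2 - phi)" using f1 phi_ub by (intro mult_strict_right_mono) auto
  hence fp: "0 < f * (2 - phi)" "f * (2 - phi) < 1" using fp0 phi_lb by auto
  have u1: "x < u" "u < x + 1" using u_eq xr fp by linarith+
  define v where "v = real q * phi * phi"
  have v_eq: "v = c + q + g"
  proof -
    have "v = q * (phi * phi)" unfolding v_def by (simp add: mult.assoc)
    also have "\<dots> = q * (phi + 1)" using pp by simp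
    finally show ?thesis unfolding g_def by (simp add: algebra_simps)
  qed
  have v1: "x < v" "v < x + 1" using v_eq xr2 g0 g1 by linarith+
  have pu: "a + real m = u * (phi - 1)"
  proof -
    have "u * (phi - 1) = (a + real m) * (phi * phi - phi)" unfolding u_def by (simp add: algebra_simps)
    also have "\<dots> = a + real m" using pp by simp
    finally show ?thesis by simp
  qed
  have qv: "real q = v * (2 - phi)"
  proof -
    have "v * (2 - phi) = q * (2 * (phi * phi) - phi * (phi * phi))" unfolding v_def by (simp add: algebra_simps)
    also have "2 * (phi * phi) - phi * (phi * phi) = 1" using pp by (simp add: algebra_simps)
    finally show ?thesis by simp
  qed
  have s: "real_of_int (a + int m + int q) = u * (phi - 1) + v * (2 - phi)" using pu qv by simp
  have w1: "0 < phi - 1" "0 < 2 - phi" using phi_lb phi_ub by auto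
  have "x * (phi - 1) < u * (phi - 1)" "x * (2 - phi) < v * (2 - phi)"
    using u1 v1 w1 by (auto intro: mult_strict_right_mono)
  hence lo: "real_of_int x < real_of_int (a + int m + int q)" using s by (simp add: algebra_simps)
  have "u * (phi - 1) < (x+1) * (phi - 1)" "v * (2 - phi) < (x+1) * (2 - phi)"
    using u1 v1 w1 by (auto intro: mult_strict_right_mono)
  hence hi: "real_of_int (a + int m + int q) < real_of_int x + 1" using s by (simp add: algebra_simps)
  have "x < a + int m + int q" using lo by (simp only: of_int_less_iff)
  moreover have "a + int m + int q < x + 1" using hi by (metis of_int_1 of_int_add of_int_less_iff)
  ultimately show False by linarith
qed

lemma in_R10: assumes "k \<ge> 4" shows "int (fib k + 2) \<in> R 1 0"
proof -
  define j where "j = k - 2"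
  have j: "k = j + 2" "j \<ge> 2" using assms unfolding j_def by simp_all
  have fk: "fib k = fib (Suc j) + fib j" using j by simp
  define m where "m = fib j + 1"
  have e: "phi * fib j - fib (Suc j) = -((1 - phi)^j)" by (rule e_formula)
  have bnd: "1 \<le> (phi * fib j - fib (Suc j)) + phi \<and> (phi * fib j - fib (Suc j)) + phi < 2"
  proof (cases "j = 2")
    case True
    have "fib j = 1" "fib (Suc j) = 2" using True by (simp_all add: numeral_eq_Suc)
    then show ?thesis using phi_lb phi_ub by simp
  next
    case False
    hence "j \<ge> 3" using j by simp
    from e_small[OF this] c3 phi_lb phi_ub show ?thesis by (auto simp: abs_le_iff)
  qed
  have "\<lfloor>real m * phi\<rfloor> = int (fib (Suc j)) + 1"
  proof (rule floor_unique)
    have "real m * phi = fib (Suc j) + ((phi * fib j - fib (Suc j)) + phi)" unfolding m_def by (simp add: algebra_simps)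
    thus "real_of_int (int (fib (Suc j)) + 1) \<le> real m * phi" "real m * phi < real_of_int (int (fib (Suc j)) + 1) + 1"
      using bnd by simp_all
  qed
  hence "int (fib k + 2) = \<lfloor>real m * phi\<rfloor> + int m" unfolding m_def using fk by simp
  moreover have "m \<ge> 1" unfolding m_def by simp
  ultimately show ?thesis unfolding R10_iff by blast
qed

lemma tau_step: assumes "k \<ge> 4" shows "tau (fib k + 2) = fib (Suc k) + 2"
proof -
  have a: "int (fib k + 2) \<in> R 1 0" by (rule in_R10[OF assms])
  have b: "int (fib k + 2) \<notin> R 2 0" using disj a by blast
  have bnd: "\<bar>phi * fib k - fib (Suc k)\<bar> < 0.15" using e_small4[OF assms] c4 by linarith
  have bnd1: "phi * fib k - fib (Suc k) < 0.15" "-0.15 < phi * fib k - fib (Suc k)" using bnd by linarith+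
  have "\<lfloor>phi * real (fib k + 2) - 1\<rfloor> = int (fib (Suc k)) + 2"
  proof (rule floor_unique)
    have h: "phi * real (fib k + 2) - 1 = fib (Suc k) + (phi * fib k - fib (Suc k)) + 2 * phi - 1" by (simp add: algebra_simps)
    show "real_of_int (int (fib (Suc k)) + 2) \<le> phi * real (fib k + 2) - 1"
      using h bnd1 phi_lb phi_ub by simp
    show "phi * real (fib k + 2) - 1 < real_of_int (int (fib (Suc k)) + 2) + 1"
      using h bnd1 phi_lb phi_ub by simp
  qed
  thus ?thesis unfolding tau_def using a b by simp
qed

lemma tau3: "tau 3 = 5"
proof -
  have fl: "\<lfloor>real (1::nat) * phi\<rfloor> = 1" using phi_lb phi_ub by (simp add: floor_eq_iff)
  have "int 3 \<in> R 2 0" unfolding R20_iff using fl by (intro exI[of _ 1]) simp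
  moreover have "\<lfloor>phi * real (3::nat) + 1\<rfloor> = 5" using phi_lb phi_ub by (simp add: floor_eq_iff)
  ultimately show ?thesis unfolding tau_def by simp
qed

theorem theorem4p7:
  fixes n :: nat
  assumes "n \<ge> 1"
  shows "(tau ^^ n) 3 = fib (n + 3) + 2"
  using assms
proof (induction n rule: dec_induct)
  case base
  then show ?case using tau3 by (simp add: numeral_eq_Suc)
next
  case (step n)
  have "(tau ^^ Suc n) 3 = tau (fib (n + 3) + 2)" using step.IH by simp
  also have "\<dots> = fib (Suc (n + 3)) + 2" by (rule tau_step) (use step.hyps in simp)
  finally show ?case by simp
qed

end
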